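(* For all integers $r, c \geq 1$, $S(r,c) = T(r,c) = \binom{r+c-2}{c-1}$.
   Context: Six-vertex model: on an $r \times c$ grid ($r$ rows, $c$ columns) there are $r$ horizontal lines and $c$ vertical lines meeting in $rc$ vertices. Each horizontal line consists of $c+1$ edges (the outermost ones are a left and a right boundary edge) and each vertical line of $r+1$ edges (the outermost ones are a top and a bottom boundary edge). A state assigns an orientation to every edge, agreeing with prescribed orientations on the boundary edges, such that at every vertex exactly two of the four adjacent edges point into the vertex and two point out. $S(r,c)$ is the number of states on the $r\times c$ grid with boundary conditions: all left boundary arrows point right; the right boundary arrow of the bottom row points left and all other right boundary arrows point right; all bottom boundary arrows point down; the top boundary arrow of the leftmost column points up and all other top boundary arrows point down. $T(r,c)$ is the number of states on the $r\times c$ grid with boundary conditions: the left boundary arrow of the top row points left and all other left boundary arrows point right; the right boundary arrow of the bottom row points left and all other right boundary arrows point right; all top and bottom boundary arrows point down. *)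

theory Defs
  imports Main
begin

text \<open>Rows are numbered 0..r-1 from top to bottom, columns 0..c-1 from left to right.
  Horizontal edges: h i j for row i < r and j \<le> c; edge j lies between vertex (i,j-1) and
  (i,j); j = 0 is the left boundary edge and j = c the right boundary edge.
  h i j = True means the arrow points right.
  Vertical edges: v j i for column j < c and i \<le> r; edge i lies between vertex (i-1,j) and
  (i,j); i = 0 is the top boundary edge and i = r the bottom boundary edge.
  v j i = True means the arrow points down.
  Outside these index ranges the functions are required to be False (normalisation,
  so that states are in bijection with orientations).\<close>

definition ice_rule :: "nat \<Rightarrow> nat \<Rightarrow> (nat \<Rightarrow> nat \<Rightarrow> bool) \<Rightarrow> (nat \<Rightarrow> nat \<Rightarrow> bool) \<Rightarrow> bool" where
  "ice_rule r c h v \<longleftrightarrow>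
     (\<forall>i<r. \<forall>j<c. length (filter id [h i j, \<not> h i (Suc j), v j i, \<not> v j (Suc i)]) = 2)"

definition six_vertex_states ::
  "nat \<Rightarrow> nat \<Rightarrow> (nat \<Rightarrow> bool) \<Rightarrow> (nat \<Rightarrow> bool) \<Rightarrow> (nat \<Rightarrow> bool) \<Rightarrow> (nat \<Rightarrow> bool)
    \<Rightarrow> ((nat \<Rightarrow> nat \<Rightarrow> bool) \<times> (nat \<Rightarrow> nat \<Rightarrow> bool)) set" where
  "six_vertex_states r c L R Tp B =
     {(h, v). (\<forall>i j. h i j \<longrightarrow> i < r \<and> j \<le> c) \<and> (\<forall>j i. v j i \<longrightarrow> j < c \<and> i \<le> r)
        \<and> (\<forall>i<r. h i 0 = L i \<and> h i c = R i)
        \<and> (\<forall>j<c. v j 0 = Tp j \<and> v j r = B j)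
        \<and> ice_rule r c h v}"

text \<open>S: left all right (True); right: bottom row left (False), others right;
  bottom all down (True); top: leftmost column up (False), others down.\<close>
definition S :: "nat \<Rightarrow> nat \<Rightarrow> nat" where
  "S r c = card (six_vertex_states r c (\<lambda>i. True) (\<lambda>i. i \<noteq> r - 1) (\<lambda>j. j \<noteq> 0) (\<lambda>j. True))"

text \<open>T: left: top row left, others right; right: bottom row left, others right;
  top and bottom all down.\<close>
definition T :: "nat \<Rightarrow> nat \<Rightarrow> nat" where
  "T r c = card (six_vertex_states r c (\<lambda>i. i \<noteq> 0) (\<lambda>i. i \<noteq> r - 1) (\<lambda>j. True) (\<lambda>j. True))"

end

theory Submission
  imports Defs
begin

definition ice4 :: "bool \<Rightarrow> bool \<Rightarrow> bool \<Rightarrow> bool \<Rightarrow> bool" where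
  "ice4 a b c d \<longleftrightarrow> ((a \<and> c) = (b \<and> d) \<and> (a \<or> c) = (b \<or> d))"

lemma ice_iff: "length (filter id [a, \<not> b, c, \<not> d]) = 2 \<longleftrightarrow> ice4 a b c d"
  by (cases a; cases b; cases c; cases d) (auto simp: ice4_def)

lemma ice_rule_iff: "ice_rule r c h v \<longleftrightarrow>
   (\<forall>i<r. \<forall>j<c. ice4 (h i j) (h i (Suc j)) (v j i) (v j (Suc i)))"
  by (simp only: ice_rule_def ice_iff)

lemma mem_SV: "(h, v) \<in> six_vertex_states r c L R Tp B \<longleftrightarrow>
  (\<forall>i j. h i j \<longrightarrow> i < r \<and> j \<le> c) \<and> (\<forall>j i. v j i \<longrightarrow> j < c \<and> i \<le> r)
  \<and> (\<forall>i<r. h i 0 = L i \<and> h i c = R i) \<and> (\<forall>j<c. v j 0 = Tp j \<and> v j r = B j)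
  \<and> (\<forall>i<r. \<forall>j<c. ice4 (h i j) (h i (Suc j)) (v j i) (v j (Suc i)))"
  by (simp add: six_vertex_states_def ice_rule_iff)

lemma SV_cong:
  assumes "\<forall>i<r. L i = L' i" "\<forall>i<r. R i = R' i" "\<forall>j<c. Tp j = Tp' j" "\<forall>j<c. B j = B' j"
  shows "six_vertex_states r c L R Tp B = six_vertex_states r c L' R' Tp' B'"
  using assms unfolding six_vertex_states_def by auto

lemma finite_fun2:
  "finite {h :: nat \<Rightarrow> nat \<Rightarrow> bool. \<forall>i j. h i j \<longrightarrow> i < a \<and> j \<le> b}"
proof -
  let ?H = "{h :: nat \<Rightarrow> nat \<Rightarrow> bool. \<forall>i j. h i j \<longrightarrow> i < a \<and> j \<le> b}"
  have "?H \<subseteq> (\<lambda>A i j. (i, j) \<in> A) ` Pow ({..<a} \<times> {..b})"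
  proof
    fix h assume "h \<in> ?H"
    then have "{(i,j). h i j} \<in> Pow ({..<a} \<times> {..b})" by auto
    moreover have "h = (\<lambda>i j. (i, j) \<in> {(i,j). h i j})" by simp
    ultimately show "h \<in> (\<lambda>A i j. (i, j) \<in> A) ` Pow ({..<a} \<times> {..b})" by blast
  qed
  then show ?thesis by (rule finite_subset) simp
qed

lemma finite_SV: "finite (six_vertex_states r c L R Tp B)"
proof -
  have "six_vertex_states r c L R Tp B \<subseteq>
     {h :: nat \<Rightarrow> nat \<Rightarrow> bool. \<forall>i j. h i j \<longrightarrow> i < r \<and> j \<le> c} \<times>
     {v :: nat \<Rightarrow> nat \<Rightarrow> bool. \<forall>i j. v i j \<longrightarrow> i < c \<and> j \<le> r}"
    unfolding six_vertex_states_def by auto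
  then show ?thesis by (rule finite_subset) (intro finite_cartesian_product finite_fun2)
qed

lemma down:
  assumes LT: "L 0 \<noteq> Tp 0" and Tp1: "\<forall>j. 1 \<le> j \<longrightarrow> j < Suc c \<longrightarrow> Tp j"
    and R0: "R 0 \<or> (r = 0 \<and> B 0)"
  shows "card {s \<in> six_vertex_states (Suc r) (Suc c) L R Tp B. \<not> snd s 0 1}
       = card (six_vertex_states r (Suc c) (\<lambda>i. L (Suc i)) (\<lambda>i. R (Suc i)) (\<lambda>j. j \<noteq> 0) B)"
    (is "card ?A = card ?A'")
proof (cases "R 0")
  case False
  with R0 have r0: "r = 0" "B 0" by auto
  have "?A = {}" using r0 by (auto simp: six_vertex_states_def)
  moreover have "?A' = {}" using r0 by (auto simp: six_vertex_states_def)
  ultimately show ?thesis by (metis card.empty)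
next
  case True
  have row: "h 0 (Suc j) \<and> v j 1 = (j \<noteq> 0)" if hv: "(h, v) \<in> ?A" and j: "j < Suc c" for h v j
    using j
  proof (induction j)
    case 0
    from hv have I: "\<forall>i<Suc r. \<forall>j<Suc c. ice4 (h i j) (h i (Suc j)) (v j i) (v j (Suc i))"
      by (simp add: mem_SV)
    have "ice4 (h 0 0) (h 0 1) (v 0 0) (v 0 1)" using I[rule_format, of 0 0] by simp
    moreover from hv have "h 0 0 = L 0" "v 0 0 = Tp 0" "\<not> v 0 1"
      by (auto simp: mem_SV)
    ultimately have "ice4 (L 0) (h 0 1) (Tp 0) False" by simp
    then show ?case using LT \<open>\<not> v 0 1\<close> by (auto simp: ice4_def)
  next
    case (Suc j)
    then have "h 0 (Suc j)" by simp
    moreover from hv have I: "\<forall>i<Suc r. \<forall>j<Suc c. ice4 (h i j) (h i (Suc j)) (v j i) (v j (Suc i))"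
      by (simp add: mem_SV)
    moreover from hv Suc.prems have "v (Suc j) 0 = Tp (Suc j)"
      by (auto simp: mem_SV)
    ultimately have "ice4 (h 0 (Suc j)) (h 0 (Suc (Suc j))) (Tp (Suc j)) (v (Suc j) 1)"
      using Suc.prems I[rule_format, of 0 "Suc j"] by simp
    moreover have "Tp (Suc j)" using Tp1 Suc.prems by auto
    ultimately show ?case using \<open>h 0 (Suc j)\<close> by (auto simp: ice4_def)
  qed
  define f where "f = (\<lambda>(h::nat\<Rightarrow>nat\<Rightarrow>bool, v::nat\<Rightarrow>nat\<Rightarrow>bool).
      ((\<lambda>i j. h (Suc i) j), (\<lambda>j i. v j (Suc i))))"
  define g where "g = (\<lambda>(h::nat\<Rightarrow>nat\<Rightarrow>bool, v::nat\<Rightarrow>nat\<Rightarrow>bool).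
      ((\<lambda>i j. if i = 0 then (if j = 0 then L 0 else j \<le> Suc c) else h (i - 1) j),
       (\<lambda>j i. if i = 0 then (j < Suc c \<and> Tp j) else v j (i - 1))))"
  have "bij_betw f ?A ?A'"
  proof (rule bij_betw_byWitness[where f' = g])
    show "\<forall>a\<in>?A. g (f a) = a"
    proof
      fix a assume a: "a \<in> ?A"
      obtain h v where hv: "a = (h, v)" by (cases a)
      have m: "(h, v) \<in> ?A" using a hv by simp
      then have M: "(h, v) \<in> six_vertex_states (Suc r) (Suc c) L R Tp B" by simp
      have "(\<lambda>i j. if i = 0 then (if j = 0 then L 0 else j \<le> Suc c) else h (Suc (i - 1)) j) = h"
      proof (intro ext)
        fix i j
        show "(if i = 0 then (if j = 0 then L 0 else j \<le> Suc c) else h (Suc (i - 1)) j) = h i j"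
        proof (cases "i = 0")
          case True
          show ?thesis
          proof (cases j)
            case 0 then show ?thesis using M True by (auto simp: mem_SV)
          next
            case (Suc j')
            then show ?thesis using M True row[OF m, of j'] by (auto simp: mem_SV)
          qed
        qed simp
      qed
      moreover have "(\<lambda>j i. if i = 0 then (j < Suc c \<and> Tp j) else v j (Suc (i - 1))) = v"
      proof (intro ext)
        fix j i
        show "(if i = 0 then (j < Suc c \<and> Tp j) else v j (Suc (i - 1))) = v j i"
          using M by (cases "i = 0"; cases "j < Suc c") (auto simp: mem_SV)
      qed
      ultimately show "g (f a) = a" unfolding hv f_def g_def by simp
    qed
    show "\<forall>a\<in>?A'. f (g a) = a"
      by (auto simp: f_def g_def intro!: ext)
    show "f ` ?A \<subseteq> ?A'"
    proof
      fix b assume "b \<in> f ` ?A"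
      then obtain h v where m: "(h, v) \<in> ?A" and b: "b = f (h, v)" by auto
      then have M: "(h, v) \<in> six_vertex_states (Suc r) (Suc c) L R Tp B" by simp
      have "\<forall>j<Suc c. v j 1 = (j \<noteq> 0)" using row[OF m] by auto
      then show "b \<in> ?A'" using M unfolding b f_def by (auto simp: mem_SV)
    qed
    show "g ` ?A' \<subseteq> ?A"
    proof
      fix b assume "b \<in> g ` ?A'"
      then obtain h v where m: "(h, v) \<in> ?A'" and b: "b = g (h, v)" by auto
      have ice: "ice4 (if i = 0 then (if j = 0 then L 0 else j \<le> Suc c) else h (i - 1) j)
                      (if i = 0 then (if Suc j = 0 then L 0 else Suc j \<le> Suc c) else h (i - 1) (Suc j))
                      (if i = 0 then (j < Suc c \<and> Tp j) else v j (i - 1))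
                      (if Suc i = 0 then (j < Suc c \<and> Tp j) else v j (Suc i - 1))"
        if "i < Suc r" "j < Suc c" for i j
      proof (cases i)
        case 0
        show ?thesis
        proof (cases j)
          case 0 then show ?thesis using m \<open>i = 0\<close> LT by (auto simp: mem_SV ice4_def)
        next
          case (Suc j')
          then show ?thesis using m \<open>i = 0\<close> Tp1 that by (auto simp: mem_SV ice4_def)
        qed
      next
        case (Suc i')
        then show ?thesis using m that by (auto simp: mem_SV)
      qed
      define gh where "gh = (\<lambda>i j. if i = 0 then (if j = 0 then L 0 else j \<le> Suc c) else h (i - 1) j)"
      define gv where "gv = (\<lambda>j i. if i = 0 then (j < Suc c \<and> Tp j) else v j (i - 1))"
      have bg: "b = (gh, gv)" unfolding b g_def gh_def gv_def by simp
      from m have m1: "\<forall>i j. h i j \<longrightarrow> i < r \<and> j \<le> Suc c"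
        and m2: "\<forall>j i. v j i \<longrightarrow> j < Suc c \<and> i \<le> r"
        and m3: "\<forall>i<r. h i 0 = L (Suc i) \<and> h i (Suc c) = R (Suc i)"
        and m4: "\<forall>j<Suc c. v j 0 = (j \<noteq> 0) \<and> v j r = B j"
        by (simp_all add: mem_SV)
      have "(gh, gv) \<in> six_vertex_states (Suc r) (Suc c) L R Tp B"
        unfolding mem_SV
      proof (intro conjI)
        show "\<forall>i j. gh i j \<longrightarrow> i < Suc r \<and> j \<le> Suc c"
        proof (intro allI impI)
          fix i j assume "gh i j"
          then show "i < Suc r \<and> j \<le> Suc c" using m1[rule_format, of "i - 1" j]
            by (auto simp: gh_def split: if_splits)
        qed
        show "\<forall>j i. gv j i \<longrightarrow> j < Suc c \<and> i \<le> Suc r"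
        proof (intro allI impI)
          fix j i assume "gv j i"
          then show "j < Suc c \<and> i \<le> Suc r" using m2[rule_format, of j "i - 1"]
            by (auto simp: gv_def split: if_splits)
        qed
        show "\<forall>i<Suc r. gh i 0 = L i \<and> gh i (Suc c) = R i"
        proof (intro allI impI)
          fix i assume "i < Suc r"
          then show "gh i 0 = L i \<and> gh i (Suc c) = R i" using m3 True unfolding gh_def
            by (cases i) auto
        qed
        show "\<forall>j<Suc c. gv j 0 = Tp j \<and> gv j (Suc r) = B j"
          using m4 unfolding gv_def by simp
        show "\<forall>i<Suc r. \<forall>j<Suc c. ice4 (gh i j) (gh i (Suc j)) (gv j i) (gv j (Suc i))"
          using ice unfolding gh_def gv_def by simp
      qed
      moreover have "\<not> gv 0 1" using m4 unfolding gv_def by simp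
      ultimately show "b \<in> ?A" unfolding bg by simp
    qed
  qed
  then show ?thesis by (rule bij_betw_same_card)
qed

lemma right:
  assumes LT: "L 0 \<noteq> Tp 0" and L1: "\<forall>i. 1 \<le> i \<longrightarrow> i < r \<longrightarrow> L i"
    and B0: "B 0" and r0: "0 < r"
  shows "card {s \<in> six_vertex_states r (Suc c) L R Tp B. snd s 0 1}
       = card (six_vertex_states r c (\<lambda>i. i \<noteq> 0) R (\<lambda>j. Tp (Suc j)) (\<lambda>j. B (Suc j)))"
    (is "card ?A = card ?A'")
proof -
  have col: "v 0 (Suc i) \<and> h i 1 = (i \<noteq> 0)" if hv: "(h, v) \<in> ?A" and i: "i < r" for h v i
    using i
  proof (induction i)
    case 0
    from hv have I: "\<forall>i<r. \<forall>j<Suc c. ice4 (h i j) (h i (Suc j)) (v j i) (v j (Suc i))"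
      by (simp add: mem_SV)
    have "ice4 (h 0 0) (h 0 1) (v 0 0) (v 0 1)" using I[rule_format, of 0 0] r0 by simp
    moreover from hv r0 have "h 0 0 = L 0" "v 0 0 = Tp 0" "v 0 1"
      by (auto simp: mem_SV)
    ultimately have "ice4 (L 0) (h 0 1) (Tp 0) True" by simp
    then show ?case using LT \<open>v 0 1\<close> by (auto simp: ice4_def)
  next
    case (Suc i)
    then have "v 0 (Suc i)" by simp
    moreover from hv have I: "\<forall>i<r. \<forall>j<Suc c. ice4 (h i j) (h i (Suc j)) (v j i) (v j (Suc i))"
      by (simp add: mem_SV)
    moreover from hv Suc.prems have "h (Suc i) 0 = L (Suc i)"
      by (auto simp: mem_SV)
    moreover have "L (Suc i)" using L1 Suc.prems by auto
    ultimately have "ice4 True (h (Suc i) 1) True (v 0 (Suc (Suc i)))"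
      using Suc.prems I[rule_format, of "Suc i" 0] by simp
    then show ?case using \<open>v 0 (Suc i)\<close> \<open>L (Suc i)\<close> by (auto simp: ice4_def)
  qed
  define f where "f = (\<lambda>(h::nat\<Rightarrow>nat\<Rightarrow>bool, v::nat\<Rightarrow>nat\<Rightarrow>bool).
      ((\<lambda>i j. h i (Suc j)), (\<lambda>j i. v (Suc j) i)))"
  define g where "g = (\<lambda>(h::nat\<Rightarrow>nat\<Rightarrow>bool, v::nat\<Rightarrow>nat\<Rightarrow>bool).
      ((\<lambda>i j. if j = 0 then (i < r \<and> L i) else h i (j - 1)),
       (\<lambda>j i. if j = 0 then (if i = 0 then Tp 0 else i \<le> r) else v (j - 1) i)))"
  have "bij_betw f ?A ?A'"
  proof (rule bij_betw_byWitness[where f' = g])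
    show "\<forall>a\<in>?A. g (f a) = a"
    proof
      fix a assume a: "a \<in> ?A"
      obtain h v where hv: "a = (h, v)" by (cases a)
      have m: "(h, v) \<in> ?A" using a hv by simp
      then have M: "(h, v) \<in> six_vertex_states r (Suc c) L R Tp B" by simp
      have "(\<lambda>j i. if j = 0 then (if i = 0 then Tp 0 else i \<le> r) else v (Suc (j - 1)) i) = v"
      proof (intro ext)
        fix j i
        show "(if j = 0 then (if i = 0 then Tp 0 else i \<le> r) else v (Suc (j - 1)) i) = v j i"
        proof (cases "j = 0")
          case True
          show ?thesis
          proof (cases i)
            case 0 then show ?thesis using M True by (auto simp: mem_SV)
          next
            case (Suc i')
            then show ?thesis using M True col[OF m, of i'] by (auto simp: mem_SV)
          qed
        qed simp
      qed
      moreover have "(\<lambda>i j. if j = 0 then (i < r \<and> L i) else h i (Suc (j - 1))) = h"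
      proof (intro ext)
        fix i j
        show "(if j = 0 then (i < r \<and> L i) else h i (Suc (j - 1))) = h i j"
          using M by (cases "j = 0"; cases "i < r") (auto simp: mem_SV)
      qed
      ultimately show "g (f a) = a" unfolding hv f_def g_def by simp
    qed
    show "\<forall>a\<in>?A'. f (g a) = a"
      by (auto simp: f_def g_def intro!: ext)
    show "f ` ?A \<subseteq> ?A'"
    proof
      fix b assume "b \<in> f ` ?A"
      then obtain h v where m: "(h, v) \<in> ?A" and b: "b = f (h, v)" by auto
      then have M: "(h, v) \<in> six_vertex_states r (Suc c) L R Tp B" by simp
      have "\<forall>i<r. h i 1 = (i \<noteq> 0)" using col[OF m] by auto
      then show "b \<in> ?A'" using M unfolding b f_def by (auto simp: mem_SV)
    qed
    show "g ` ?A' \<subseteq> ?A"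
    proof
      fix b assume "b \<in> g ` ?A'"
      then obtain h v where m: "(h, v) \<in> ?A'" and b: "b = g (h, v)" by auto
      have ice: "ice4 (if j = 0 then (i < r \<and> L i) else h i (j - 1))
                      (if Suc j = 0 then (i < r \<and> L i) else h i (Suc j - 1))
                      (if j = 0 then (if i = 0 then Tp 0 else i \<le> r) else v (j - 1) i)
                      (if j = 0 then (if Suc i = 0 then Tp 0 else Suc i \<le> r) else v (j - 1) (Suc i))"
        if "i < r" "j < Suc c" for i j
      proof (cases j)
        case 0
        show ?thesis
        proof (cases i)
          case 0 then show ?thesis using m \<open>j = 0\<close> LT r0 by (auto simp: mem_SV ice4_def)
        next
          case (Suc i')
          then show ?thesis using m \<open>j = 0\<close> L1 that by (auto simp: mem_SV ice4_def)
        qed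
      next
        case (Suc j')
        then show ?thesis using m that by (auto simp: mem_SV)
      qed
      define gh where "gh = (\<lambda>i j. if j = 0 then (i < r \<and> L i) else h i (j - 1))"
      define gv where "gv = (\<lambda>j i. if j = 0 then (if i = 0 then Tp 0 else i \<le> r) else v (j - 1) i)"
      have bg: "b = (gh, gv)" unfolding b g_def gh_def gv_def by simp
      from m have m1: "\<forall>i j. h i j \<longrightarrow> i < r \<and> j \<le> c"
        and m2: "\<forall>j i. v j i \<longrightarrow> j < c \<and> i \<le> r"
        and m3: "\<forall>i<r. h i 0 = (i \<noteq> 0) \<and> h i c = R i"
        and m4: "\<forall>j<c. v j 0 = Tp (Suc j) \<and> v j r = B (Suc j)"
        by (simp_all add: mem_SV)
      have "(gh, gv) \<in> six_vertex_states r (Suc c) L R Tp B"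
        unfolding mem_SV
      proof (intro conjI)
        show "\<forall>i j. gh i j \<longrightarrow> i < r \<and> j \<le> Suc c"
        proof (intro allI impI)
          fix i j assume "gh i j"
          then show "i < r \<and> j \<le> Suc c" using m1[rule_format, of i "j - 1"]
            by (auto simp: gh_def split: if_splits)
        qed
        show "\<forall>j i. gv j i \<longrightarrow> j < Suc c \<and> i \<le> r"
        proof (intro allI impI)
          fix j i assume "gv j i"
          then show "j < Suc c \<and> i \<le> r" using m2[rule_format, of "j - 1" i] r0
            by (auto simp: gv_def split: if_splits)
        qed
        show "\<forall>i<r. gh i 0 = L i \<and> gh i (Suc c) = R i" using m3 unfolding gh_def by simp
        show "\<forall>j<Suc c. gv j 0 = Tp j \<and> gv j r = B j"
        proof (intro allI impI)
          fix j assume "j < Suc c"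
          then show "gv j 0 = Tp j \<and> gv j r = B j" using m4 B0 r0 unfolding gv_def
            by (cases j) auto
        qed
        show "\<forall>i<r. \<forall>j<Suc c. ice4 (gh i j) (gh i (Suc j)) (gv j i) (gv j (Suc i))"
          using ice unfolding gh_def gv_def by simp
      qed
      moreover have "gv 0 1" using r0 unfolding gv_def by simp
      ultimately show "b \<in> ?A" unfolding bg by simp
    qed
  qed
  then show ?thesis by (rule bij_betw_same_card)
qed

lemma recur:
  assumes LT: "L 0 \<noteq> Tp 0" and Tp1: "\<forall>j. 1 \<le> j \<longrightarrow> j < Suc c \<longrightarrow> Tp j"
    and L1: "\<forall>i. 1 \<le> i \<longrightarrow> i < Suc r \<longrightarrow> L i" and B0: "B 0" and R0: "R 0 \<or> r = 0"
  shows "card (six_vertex_states (Suc r) (Suc c) L R Tp B)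
    = card (six_vertex_states r (Suc c) (\<lambda>i. L (Suc i)) (\<lambda>i. R (Suc i)) (\<lambda>j. j \<noteq> 0) B)
    + card (six_vertex_states (Suc r) c (\<lambda>i. i \<noteq> 0) R (\<lambda>j. Tp (Suc j)) (\<lambda>j. B (Suc j)))"
proof -
  let ?X = "six_vertex_states (Suc r) (Suc c) L R Tp B"
  have X: "?X = {s \<in> ?X. \<not> snd s 0 1} \<union> {s \<in> ?X. snd s 0 1}" by auto
  have "card ?X = card {s \<in> ?X. \<not> snd s 0 1} + card {s \<in> ?X. snd s 0 1}"
    by (subst X, rule card_Un_disjoint) (auto intro: finite_subset[OF _ finite_SV])
  also have "card {s \<in> ?X. \<not> snd s 0 1} =
     card (six_vertex_states r (Suc c) (\<lambda>i. L (Suc i)) (\<lambda>i. R (Suc i)) (\<lambda>j. j \<noteq> 0) B)"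
    by (rule down) (use LT Tp1 R0 B0 in auto)
  also have "card {s \<in> ?X. snd s 0 1} =
     card (six_vertex_states (Suc r) c (\<lambda>i. i \<noteq> 0) R (\<lambda>j. Tp (Suc j)) (\<lambda>j. B (Suc j)))"
    by (rule right) (use LT L1 B0 in auto)
  finally show ?thesis .
qed

lemma recS: "S (Suc r) (Suc c) = S r (Suc c) + T (Suc r) c"
proof -
  have "S (Suc r) (Suc c) = card (six_vertex_states r (Suc c) (\<lambda>i. True) (\<lambda>i. Suc i \<noteq> Suc r - 1) (\<lambda>j. j \<noteq> 0) (\<lambda>j. True))
    + card (six_vertex_states (Suc r) c (\<lambda>i. i \<noteq> 0) (\<lambda>i. i \<noteq> Suc r - 1) (\<lambda>j. Suc j \<noteq> 0) (\<lambda>j. True))"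
    unfolding S_def by (rule recur) auto
  also have "six_vertex_states r (Suc c) (\<lambda>i. True) (\<lambda>i. Suc i \<noteq> Suc r - 1) (\<lambda>j. j \<noteq> 0) (\<lambda>j. True)
      = six_vertex_states r (Suc c) (\<lambda>i. True) (\<lambda>i. i \<noteq> r - 1) (\<lambda>j. j \<noteq> 0) (\<lambda>j. True)"
    by (rule SV_cong) auto
  also have "six_vertex_states (Suc r) c (\<lambda>i. i \<noteq> 0) (\<lambda>i. i \<noteq> Suc r - 1) (\<lambda>j. Suc j \<noteq> 0) (\<lambda>j. True)
      = six_vertex_states (Suc r) c (\<lambda>i. i \<noteq> 0) (\<lambda>i. i \<noteq> Suc r - 1) (\<lambda>j. True) (\<lambda>j. True)"
    by simp
  finally show ?thesis unfolding S_def T_def .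
qed

lemma recT: "T (Suc r) (Suc c) = S r (Suc c) + T (Suc r) c"
proof -
  have "T (Suc r) (Suc c) = card (six_vertex_states r (Suc c) (\<lambda>i. Suc i \<noteq> 0) (\<lambda>i. Suc i \<noteq> Suc r - 1) (\<lambda>j. j \<noteq> 0) (\<lambda>j. True))
    + card (six_vertex_states (Suc r) c (\<lambda>i. i \<noteq> 0) (\<lambda>i. i \<noteq> Suc r - 1) (\<lambda>j. True) (\<lambda>j. True))"
    unfolding T_def by (rule recur) auto
  also have "six_vertex_states r (Suc c) (\<lambda>i. Suc i \<noteq> 0) (\<lambda>i. Suc i \<noteq> Suc r - 1) (\<lambda>j. j \<noteq> 0) (\<lambda>j. True)
      = six_vertex_states r (Suc c) (\<lambda>i. True) (\<lambda>i. i \<noteq> r - 1) (\<lambda>j. j \<noteq> 0) (\<lambda>j. True)"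
    by (rule SV_cong) auto
  finally show ?thesis unfolding S_def T_def .
qed

lemma S0: "S 0 (Suc c) = 0"
proof -
  have "six_vertex_states 0 (Suc c) (\<lambda>i. True) (\<lambda>i. i \<noteq> 0 - 1) (\<lambda>j. j \<noteq> 0) (\<lambda>j. True) = {}"
    by (auto simp: six_vertex_states_def)
  then show ?thesis unfolding S_def by (metis card.empty)
qed

lemma T10: "T (Suc 0) 0 = 1"
proof -
  have "six_vertex_states (Suc 0) 0 (\<lambda>i. i \<noteq> 0) (\<lambda>i. i \<noteq> Suc 0 - 1) (\<lambda>j. True) (\<lambda>j. True)
     = {(\<lambda>i j. False, \<lambda>j i. False)}"
  proof (intro equalityI subsetI)
    fix s assume "s \<in> six_vertex_states (Suc 0) 0 (\<lambda>i. i \<noteq> 0) (\<lambda>i. i \<noteq> Suc 0 - 1) (\<lambda>j. True) (\<lambda>j. True)"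
    moreover obtain h v where s: "s = (h, v)" by (cases s)
    ultimately have m: "(h, v) \<in> six_vertex_states (Suc 0) 0 (\<lambda>i. i \<noteq> 0) (\<lambda>i. i \<noteq> Suc 0 - 1) (\<lambda>j. True) (\<lambda>j. True)"
      by simp
    have "h = (\<lambda>i j. False)"
    proof (intro ext)
      fix i j show "h i j = False" using m by (cases "i = 0 \<and> j = 0") (auto simp: mem_SV)
    qed
    moreover have "v = (\<lambda>j i. False)" using m by (auto simp: mem_SV intro!: ext)
    ultimately show "s \<in> {(\<lambda>i j. False, \<lambda>j i. False)}" using s by simp
  qed (auto simp: mem_SV)
  then show ?thesis unfolding T_def by simp
qed

lemma TSS0: "T (Suc (Suc r)) 0 = 0"
proof -
  have "six_vertex_states (Suc (Suc r)) 0 (\<lambda>i. i \<noteq> 0) (\<lambda>i. i \<noteq> Suc (Suc r) - 1) (\<lambda>j. True) (\<lambda>j. True) = {}"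
    by (auto simp: six_vertex_states_def)
  then show ?thesis unfolding T_def by (metis card.empty)
qed

lemma main: "S (Suc a) (Suc b) = (a + b) choose b \<and> T (Suc a) (Suc b) = (a + b) choose b"
proof (induction a arbitrary: b)
  case 0
  show ?case
  proof (induction b)
    case 0
    then show ?case by (simp add: recS recT S0 T10)
  next
    case (Suc b)
    then show ?case by (simp add: recS recT S0)
  qed
next
  case (Suc a)
  note outer = Suc.IH
  show ?case
  proof (induction b)
    case 0
    then show ?case using outer[of 0] by (simp add: recS recT TSS0)
  next
    case (Suc b)
    have e: "Suc a + Suc b = Suc (a + Suc b)" "Suc a + b = a + Suc b" by simp_all
    show ?case using outer[of "Suc b"] Suc.IH unfolding recS recT e(1) binomial_Suc_Suc e(2)
      by simp
  qed
qed

theorem lemma1: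
  fixes r c :: nat
  assumes "r \<ge> 1" and "c \<ge> 1"
  shows "S r c = (r + c - 2) choose (c - 1) \<and> T r c = (r + c - 2) choose (c - 1)"
proof -
  obtain a b where ab: "r = Suc a" "c = Suc b" using assms by (metis Suc_le_D One_nat_def)
  then show ?thesis using main[of a b] by simp
qed

end
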